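(* Let $S$ be a quasi-tree of a map $\mathcal M$ and let $e,f$ be distinct edges of $\mathcal M$ that are adjacent in $\widetilde{\Lambda}(\mathcal M,S)$. Then $S'=S\triangle\{e,f\}$ is a quasi-tree of $\mathcal M$, and the vertex-colored circle graph $\widetilde{\Lambda}(\mathcal M,S')$ is obtained from $\widetilde{\Lambda}(\mathcal M,S)\wedge ef$ by exchanging the colors of $e$ and $f$. Conversely, if $S\triangle\{e,f\}$ is a quasi-tree of $\mathcal M$ (for distinct edges $e,f$), then $e$ and $f$ are adjacent in $\widetilde{\Lambda}(\mathcal M,S)$.
   Context: A map is a triple $\mathcal M=(B,\sigma,\alpha)$ with $B$ finite, $\sigma,\alpha\in\mathrm{Sym}(B)$, $\alpha$ a fixed-point-free involution, $\langle\sigma,\alpha\rangle$ transitive on $B$. Edges are the cycles of $\alpha$; $\underline b=\{b,\alpha(b)\}$. The tour of a set $F$ of edges is the permutation $\tau$ with $\tau(b)=\sigma(\alpha(b))$ if $\underline b\in F$, $\tau(b)=\sigma(b)$ otherwise; a quasi-tree is a set of edges whose tour is a single cycle on $B$. For a quasi-tree $S$ with tour $\tau$, $\widetilde\Lambda(\mathcal M,S)$ is the chord diagram obtained by placing the flags on a circle in the cyclic order of $\tau$ and joining by a chord the two flags of each edge, the chord of an edge colored $1$ if the edge is in $S$ and $2$ otherwise; it is identified with its circle graph, whose vertices are the edges of $\mathcal M$ (with these colors), two being adjacent iff their chords cross (i.e. their flags alternate around the circle). For a graph $G$ and vertex $v$, the local complementation $G\ast v$ replaces the subgraph induced on the neighbors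 of $v$ by its complement; for an edge $uv$, the pivot is $G\wedge uv=G\ast u\ast v\ast u$. *)

theory Defs
  imports "HOL-Combinatorics.Permutations"
begin

text \<open>A map (B, sigma, alpha): B finite, sigma and alpha permutations of B,
  alpha a fixed-point-free involution, and the group generated by sigma and alpha
  transitive on B (expressed as connectivity of B under the generators and their inverses).\<close>

definition gen_rel :: "'a set \<Rightarrow> ('a \<Rightarrow> 'a) \<Rightarrow> ('a \<Rightarrow> 'a) \<Rightarrow> ('a \<times> 'a) set" where
  "gen_rel B \<sigma> \<alpha> = {(x, \<sigma> x) | x. x \<in> B} \<union> {(x, inv \<sigma> x) | x. x \<in> B} \<union> {(x, \<alpha> x) | x. x \<in> B}"

definition is_map :: "'a set \<Rightarrow> ('a \<Rightarrow> 'a) \<Rightarrow> ('a \<Rightarrow> 'a) \<Rightarrow> bool" where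
  "is_map B \<sigma> \<alpha> \<longleftrightarrow> finite B \<and> \<sigma> permutes B \<and> \<alpha> permutes B
     \<and> (\<forall>b\<in>B. \<alpha> b \<noteq> b \<and> \<alpha> (\<alpha> b) = b)
     \<and> (\<forall>b\<in>B. \<forall>c\<in>B. (b, c) \<in> (gen_rel B \<sigma> \<alpha>)\<^sup>*)"

definition edge_of :: "('a \<Rightarrow> 'a) \<Rightarrow> 'a \<Rightarrow> 'a set" where
  "edge_of \<alpha> b = {b, \<alpha> b}"

definition map_edges :: "'a set \<Rightarrow> ('a \<Rightarrow> 'a) \<Rightarrow> 'a set set" where
  "map_edges B \<alpha> = edge_of \<alpha> ` B"

definition tour :: "('a \<Rightarrow> 'a) \<Rightarrow> ('a \<Rightarrow> 'a) \<Rightarrow> 'a set set \<Rightarrow> 'a \<Rightarrow> 'a" where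
  "tour \<sigma> \<alpha> F b = (if edge_of \<alpha> b \<in> F then \<sigma> (\<alpha> b) else \<sigma> b)"

definition quasi_tree :: "'a set \<Rightarrow> ('a \<Rightarrow> 'a) \<Rightarrow> ('a \<Rightarrow> 'a) \<Rightarrow> 'a set set \<Rightarrow> bool" where
  "quasi_tree B \<sigma> \<alpha> F \<longleftrightarrow> F \<subseteq> map_edges B \<alpha>
     \<and> (\<forall>b\<in>B. \<forall>c\<in>B. \<exists>n. (tour \<sigma> \<alpha> F ^^ n) b = c)"

definition cyc_dist :: "('a \<Rightarrow> 'a) \<Rightarrow> 'a \<Rightarrow> 'a \<Rightarrow> nat" where
  "cyc_dist \<tau> x y = (LEAST n. (\<tau> ^^ n) x = y)"

definition cyc_between :: "('a \<Rightarrow> 'a) \<Rightarrow> 'a \<Rightarrow> 'a \<Rightarrow> 'a \<Rightarrow> bool" where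
  "cyc_between \<tau> x y z \<longleftrightarrow> 0 < cyc_dist \<tau> x y \<and> cyc_dist \<tau> x y < cyc_dist \<tau> x z"

text \<open>Adjacency in the circle graph of the chord diagram Lambda~(M,S): two distinct edges
  are adjacent iff their chords cross, i.e. their flags alternate around the circle
  given by the tour of S.\<close>
definition lambda_adj :: "'a set \<Rightarrow> ('a \<Rightarrow> 'a) \<Rightarrow> ('a \<Rightarrow> 'a) \<Rightarrow> 'a set set \<Rightarrow> 'a set \<Rightarrow> 'a set \<Rightarrow> bool" where
  "lambda_adj B \<sigma> \<alpha> S e f \<longleftrightarrow> e \<in> map_edges B \<alpha> \<and> f \<in> map_edges B \<alpha> \<and> e \<noteq> f \<and>
     (\<exists>a\<in>B. \<exists>b\<in>B. e = edge_of \<alpha> a \<and> f = edge_of \<alpha> b \<and>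
        (cyc_between (tour \<sigma> \<alpha> S) a b (\<alpha> a) \<noteq> cyc_between (tour \<sigma> \<alpha> S) a (\<alpha> b) (\<alpha> a)))"

definition lambda_col :: "'a set set \<Rightarrow> 'a set \<Rightarrow> nat" where
  "lambda_col S x = (if x \<in> S then 1 else 2)"

definition local_comp :: "('v \<Rightarrow> 'v \<Rightarrow> bool) \<Rightarrow> 'v \<Rightarrow> ('v \<Rightarrow> 'v \<Rightarrow> bool)" where
  "local_comp G v = (\<lambda>x y. if G v x \<and> G v y \<and> x \<noteq> y then \<not> G x y else G x y)"

definition pivot :: "('v \<Rightarrow> 'v \<Rightarrow> bool) \<Rightarrow> 'v \<Rightarrow> 'v \<Rightarrow> ('v \<Rightarrow> 'v \<Rightarrow> bool)" where
  "pivot G u v = local_comp (local_comp (local_comp G u) v) u"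

end

theory Submission
  imports Defs
begin

definition inI :: "nat\<Rightarrow>nat\<Rightarrow>nat\<Rightarrow>bool" where
 "inI u v t \<longleftrightarrow> (min u v < t \<and> t < max u v)"
definition crossL :: "nat\<Rightarrow>nat\<Rightarrow>nat\<Rightarrow>nat\<Rightarrow>bool" where
 "crossL u v w z \<longleftrightarrow> (inI u v w \<noteq> inI u v z)"
definition Pp :: "nat\<Rightarrow>nat\<Rightarrow>nat\<Rightarrow>nat\<Rightarrow>nat" where
 "Pp i j k t = (if t = 0 then 0 else if t < i then t+k-i else if t = i then k else if t < j then t+k-j-i
   else if t=j then k-i else if t<k then t-j else if t = k then k-j else t)"
definition btw :: "nat\<Rightarrow>nat\<Rightarrow>nat\<Rightarrow>bool" where
 "btw x y z \<longleftrightarrow> (x<y \<and> y<z) \<or> (y<z \<and> z<x) \<or> (z<x \<and> x<y)"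

lemma cyc_btw:
  assumes "x<n" "y<n" "z<n" "x\<noteq>y" "y\<noteq>z" "x\<noteq>z"
  shows "(0 < (y+n-x) mod n \<and> (y+n-x) mod n < (z+n-x) mod n) = btw x y z"
proof -
  have m: "(w+n-x) mod n = (if x \<le> w then w - x else w+n-x)" if "w<n" for w
  proof (cases "x \<le> w")
    case True
    have "(w+n-x) mod n = (w-x+n) mod n" using True by (simp add: algebra_simps)
    also have "\<dots> = w - x" using that by (simp add: less_imp_diff_less)
    finally show ?thesis using True by simp
  next
    case False
    then show ?thesis using that assms(1) by simp
  qed
  show ?thesis unfolding btw_def m[OF assms(2)] m[OF assms(3)] using assms by auto
qed

lemma cross_btw:
  assumes "u\<noteq>v" "u\<noteq>w" "u\<noteq>z" "v\<noteq>w" "v\<noteq>z" "w\<noteq>z"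
  shows "(btw u w v \<noteq> btw u z v) = crossL u v w z"
  using assms unfolding btw_def crossL_def inI_def min_def max_def by presburger

lemma crossL_sym:
  assumes "u\<noteq>v" "u\<noteq>w" "u\<noteq>z" "v\<noteq>w" "v\<noteq>z" "w\<noteq>z"
  shows "crossL u v w z = crossL w z u v"
  using assms unfolding crossL_def inI_def min_def max_def by presburger

lemma crossL_swap1: "crossL u v w z = crossL v u w z"
  unfolding crossL_def inI_def by (simp add: min.commute max.commute)
lemma crossL_swap2: "crossL u v w z = crossL u v z w"
  unfolding crossL_def by auto

lemma Pp_lt: assumes "0<i" "i<j" "j<k" "k<n" "t<n" shows "Pp i j k t < n"
  using assms unfolding Pp_def by auto

lemma Pp_inj: assumes "0<i" "i<j" "j<k" "k<n" shows "inj_on (Pp i j k) {..<n}"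
proof
  fix x y assume "x \<in> {..<n}" "y \<in> {..<n}" "Pp i j k x = Pp i j k y"
  then show "x = y" using assms unfolding Pp_def by (auto split: if_splits)
qed

lemma Pp_succ: assumes "0<i" "i<j" "j<k" "k<n" "t<n" "t \<notin> {0,i,j,k}"
  shows "Pp i j k ((t+1) mod n) = (Pp i j k t + 1) mod n"
proof (cases "t+1 = n")
  case True
  then show ?thesis using assms unfolding Pp_def by auto
next
  case False
  then have "t+1 < n" using assms by auto
  then show ?thesis using assms unfolding Pp_def by auto
qed

lemma Pp_vals: assumes "0<i" "i<j" "j<k"
  shows "Pp i j k 0 = 0" "Pp i j k i = k" "Pp i j k j = k - i" "Pp i j k k = k - j"
  using assms unfolding Pp_def by auto

lemma Pp_flags: assumes "0<i" "i<j" "j<k" "k<n"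
  shows "Pp i j k ((j+1) mod n) = (Pp i j k 0 + 1) mod n"
    "Pp i j k ((0+1) mod n) = (Pp i j k j + 1) mod n"
    "Pp i j k ((i+1) mod n) = (Pp i j k k + 1) mod n"
    "Pp i j k ((k+1) mod n) = (Pp i j k i + 1) mod n"
proof -
  show "Pp i j k ((j+1) mod n) = (Pp i j k 0 + 1) mod n"
    using assms unfolding Pp_def by auto
  show "Pp i j k ((0+1) mod n) = (Pp i j k j + 1) mod n"
    using assms unfolding Pp_def by auto
  show "Pp i j k ((i+1) mod n) = (Pp i j k k + 1) mod n"
    using assms unfolding Pp_def by auto
  show "Pp i j k ((k+1) mod n) = (Pp i j k i + 1) mod n"
  proof (cases "k+1 = n")
    case True then show ?thesis using assms unfolding Pp_def by auto
  next
    case False then show ?thesis using assms unfolding Pp_def by auto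
  qed
qed

lemma ME: assumes "0<i" "i<j" "j<k" "t \<notin> {0,i,j,k}"
  shows "inI 0 (k-i) (Pp i j k t) = (i<t \<and> t<k)"
  using assms unfolding Pp_def inI_def by auto

lemma MF: assumes "0<i" "i<j" "j<k" "t \<notin> {0,i,j,k}"
  shows "inI k (k-j) (Pp i j k t) = (0<t \<and> t<j)"
  using assms unfolding Pp_def inI_def by auto

lemma MEF: assumes "0<i" "i<j" "j<k"
  shows "crossL 0 (k-i) k (k-j)"
  using assms unfolding crossL_def inI_def by auto
definition seg :: "nat\<Rightarrow>nat\<Rightarrow>nat\<Rightarrow>nat\<Rightarrow>nat" where
 "seg i j k t = (if t<i then 1 else if t<j then 2 else if t<k then 3 else 4)"
definition nrank :: "nat \<Rightarrow> nat" where "nrank s = (if s=1 then 3 else if s = 3 then 1 else s)"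

lemma ordP:
  assumes "0<i" "i<j" "j<k" "x \<notin> {0,i,j,k}" "y \<notin> {0,i,j,k}"
  shows "(Pp i j k x < Pp i j k y) = (if seg i j k x = seg i j k y then x < y else nrank (seg i j k x) < nrank (seg i j k y))"
proof -
  have c: "\<And>x. x \<notin> {0,i,j,k} \<Longrightarrow> (0<x \<and> x<i) \<or> (i<x \<and> x<j) \<or> (j<x \<and> x<k) \<or> k<x"
    using assms(1-3) by auto
  show ?thesis
  using c[OF assms(4)] c[OF assms(5)] assms(1-3) unfolding seg_def Pp_def nrank_def
  by (elim disjE; simp; linarith?)
qed

lemma ordO:
  assumes "0<i" "i<j" "j<k" "x \<notin> {0,i,j,k}" "y \<notin> {0,i,j,k}"
  shows "(x < y) = (if seg i j k x = seg i j k y then x < y else (seg i j k x) < (seg i j k y))"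
  using assms unfolding seg_def by auto

lemma ordO':
  assumes "0<i" "i<j" "j<k" "x \<notin> {0,i,j,k}" "y \<notin> {0,i,j,k}" "seg i j k x \<noteq> seg i j k y"
  shows "(x < y) = (seg i j k x < seg i j k y)"
  using assms unfolding seg_def by (auto split: if_splits)

lemma segr: "seg i j k x \<in> {1,2,3,4}" unfolding seg_def by auto

lemma h1: assumes "0<i" "i<j" "j<k" "x \<notin> {0,i,j,k}" shows "(0<x \<and> x<j) = (seg i j k x \<in> {1,2})"
  using assms unfolding seg_def by auto
lemma h2: assumes "0<i" "i<j" "j<k" "x \<notin> {0,i,j,k}" shows "(i<x \<and> x<k) = (seg i j k x \<in> {2,3})"
  using assms unfolding seg_def by auto

lemma inI_alt: "u \<noteq> v \<Longrightarrow> inI u v t = ((u<t \<and> t<v) \<or> (v<t \<and> t<u))"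
  unfolding inI_def by auto



lemma Pp_neq:
  assumes "0<i" "i<j" "j<k" "x \<notin> {0,i,j,k}" "y \<notin> {0,i,j,k}" "x \<noteq> y"
  shows "Pp i j k x \<noteq> Pp i j k y"
proof -
  have "Pp i j k x < Pp i j k y \<or> Pp i j k y < Pp i j k x"
    unfolding ordP[OF assms(1-5)] ordP[OF assms(1-3) assms(5) assms(4)]
    using assms(6) segr[of i j k x] segr[of i j k y] by (auto simp: nrank_def)
  then show ?thesis by auto
qed

lemma pt:
  assumes "0<i" "i<j" "j<k"
   "u1 \<notin> {0,i,j,k}" "u2 \<notin> {0,i,j,k}" "t \<notin> {0,i,j,k}"
   "u1\<noteq>u2" "u1\<noteq>t" "u2\<noteq>t"
  shows "inI (Pp i j k u1) (Pp i j k u2) (Pp i j k t) =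
   (inI u1 u2 t \<noteq> ((((0<u1 \<and> u1<j) \<noteq> (0<u2 \<and> u2<j)) \<and> (i<t \<and> t<k)) \<noteq> (((i<u1 \<and> u1<k) \<noteq> (i<u2 \<and> u2<k)) \<and> (0<t \<and> t<j))))"
proof -
  have nP: "Pp i j k u1 \<noteq> Pp i j k u2" "Pp i j k u1 \<noteq> Pp i j k t" "Pp i j k u2 \<noteq> Pp i j k t"
    using Pp_neq[OF assms(1-3)] assms(4-9) by auto
  have E: "inI (Pp i j k u1) (Pp i j k u2) (Pp i j k t) =
     ((Pp i j k u1 < Pp i j k t \<and> Pp i j k t < Pp i j k u2) \<or> (Pp i j k u2 < Pp i j k t \<and> Pp i j k t < Pp i j k u1))"
    by (rule inI_alt[OF nP(1)])
  have tot: "u1 < t \<or> t < u1" "u2 < t \<or> t < u2" "u1 < u2 \<or> u2 < u1" using assms(7-9) by auto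
  have G: "\<lbrakk>a \<in> {1,2,3,4}; b \<in> {1,2,3,4}; c \<in> {1,2,3,4::nat};
     a \<noteq> c \<Longrightarrow> (u1 < t) = (a < c); a \<noteq> c \<Longrightarrow> (t < u1) = (c < a);
     b \<noteq> c \<Longrightarrow> (u2 < t) = (b < c); b \<noteq> c \<Longrightarrow> (t < u2) = (c < b)\<rbrakk> \<Longrightarrow>
     ((if a = c then u1 < t else nrank a < nrank c) \<and> (if c = b then t < u2 else nrank c < nrank b) \<or>
      (if b = c then u2 < t else nrank b < nrank c) \<and> (if c = a then t < u1 else nrank c < nrank a)) =
    (((u1 < t) \<and> (t < u2) \<or> (u2 < t) \<and> (t < u1)) \<noteq>
     ((((a \<in> {1,2}) \<noteq> (b \<in> {1,2})) \<and> (c \<in> {2,3})) \<noteq> (((a \<in> {2,3}) \<noteq> (b \<in> {2,3})) \<and> (c \<in> {1,2}))))"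
    for a b c
    using tot unfolding nrank_def
    apply (elim insertE emptyE)
    apply simp_all
    apply auto
    done
  note oo = ordO'[OF assms(1-3)]
  show ?thesis
    unfolding E inI_alt[OF assms(7)]
    apply (simp only: ordP[OF assms(1-3) assms(4) assms(6)] ordP[OF assms(1-3) assms(6) assms(4)]
       ordP[OF assms(1-3) assms(5) assms(6)] ordP[OF assms(1-3) assms(6) assms(5)]
       h1[OF assms(1-3) assms(4)] h1[OF assms(1-3) assms(5)] h1[OF assms(1-3) assms(6)]
       h2[OF assms(1-3) assms(4)] h2[OF assms(1-3) assms(5)] h2[OF assms(1-3) assms(6)])
    apply (rule G[OF segr segr segr])
    apply (erule oo[OF assms(4) assms(6)])
    apply (erule oo[OF assms(6) assms(4), OF not_sym])
    apply (erule oo[OF assms(5) assms(6)])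
    apply (erule oo[OF assms(6) assms(5), OF not_sym])
    done
qed



lemma posB_pow:
  assumes fB: "\<And>x. x \<in> B \<Longrightarrow> f x \<in> B"
    and pn: "\<And>x. x \<in> B \<Longrightarrow> p x < n"
    and ps: "\<And>x. x \<in> B \<Longrightarrow> p (f x) = (p x + 1) mod n"
    and x: "x \<in> B"
  shows "(f^^m) x \<in> B \<and> p ((f^^m) x) = (p x + m) mod n"
proof (induction m)
  case 0
  then show ?case using x pn[OF x] by simp
next
  case (Suc m)
  then show ?case using fB ps by (simp add: mod_simps)
qed

lemma posB_dist:
  assumes fB: "\<And>x. x \<in> B \<Longrightarrow> f x \<in> B"
    and pn: "\<And>x. x \<in> B \<Longrightarrow> p x < n"
    and ps: "\<And>x. x \<in> B \<Longrightarrow> p (f x) = (p x + 1) mod n"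
    and pi: "inj_on p B"
    and x: "x \<in> B" and y: "y \<in> B"
  shows "(f^^((p y + n - p x) mod n)) x = y" "cyc_dist f x y = (p y + n - p x) mod n"
proof -
  have n0: "0 < n" using pn[OF x] by simp
  define m0 where "m0 = (p y + n - p x) mod n"
  have k: "(p x + m0) mod n = p y"
  proof -
    have "(p x + m0) mod n = (p x + (p y + n - p x)) mod n" unfolding m0_def by (simp add: mod_simps)
    also have "p x + (p y + n - p x) = p y + n" using pn[OF x] by simp
    finally show ?thesis using pn[OF y] by simp
  qed
  have w: "(f^^m0) x = y"
    using posB_pow[where B=B and f=f and p=p and n=n, OF fB pn ps x, of m0] k pi y by (metis inj_on_def)
  show "(f^^((p y + n - p x) mod n)) x = y" using w m0_def by simp
  have le: "m0 \<le> m" if "(f^^m) x = y" for m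
  proof -
    have h: "(p x + m) mod n = p y" using posB_pow[where B=B and f=f and p=p and n=n, OF fB pn ps x, of m] that by simp
    have "m0 = ((p x + m) mod n + n - p x) mod n" unfolding m0_def h ..
    also have "\<dots> = m mod n"
    proof (cases "p x + m mod n < n")
      case True
      have "(p x + m) mod n = (p x + m mod n) mod n" by (simp add: mod_add_right_eq)
      also have "\<dots> = p x + m mod n" using True by simp
      finally have "(p x + m) mod n + n - p x = m mod n + n" by simp
      then show ?thesis by simp
    next
      case False
      have "(p x + m) mod n = (p x + m mod n) mod n" by (simp add: mod_add_right_eq)
      also have "\<dots> = (p x + m mod n - n) mod n" using False by (simp add: le_mod_geq)
      also have "\<dots> = p x + m mod n - n"
      proof -
        have "p x + m mod n - n < n" using pn[OF x] mod_less_divisor[OF n0, of m] by linarith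
        then show ?thesis by simp
      qed
      finally have "(p x + m) mod n + n - p x = m mod n" using False by simp
      then show ?thesis by simp
    qed
    also have "\<dots> \<le> m" by simp
    finally show ?thesis .
  qed
  show "cyc_dist f x y = (p y + n - p x) mod n"
    unfolding cyc_dist_def m0_def[symmetric]
    by (rule Least_equality[where P="\<lambda>m. (f^^m) x = y", OF w le])
qed

lemma orbit_pos:
  assumes fin: "finite B"
    and fB: "\<And>x. x \<in> B \<Longrightarrow> f x \<in> B"
    and fi: "inj_on f B"
    and a: "a \<in> B"
    and reach: "\<And>x. x \<in> B \<Longrightarrow> \<exists>m. (f^^m) a = x"
  shows "\<And>x. x \<in> B \<Longrightarrow> cyc_dist f a x < card B"
    and "\<And>x. x \<in> B \<Longrightarrow> cyc_dist f a (f x) = (cyc_dist f a x + 1) mod card B"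
    and "inj_on (cyc_dist f a) B"
    and "cyc_dist f a a = 0"
proof -
  define p where "p = cyc_dist f a"
  define n where "n = card B"
  have powB: "(f^^m) a \<in> B" for m by (induction m) (use a fB in auto)
  have P1: "(f^^(p x)) a = x" if "x \<in> B" for x
    unfolding p_def cyc_dist_def using reach[OF that] by (rule LeastI_ex)
  have P2: "p x \<le> m" if "(f^^m) a = x" for x m
    unfolding p_def cyc_dist_def using that by (rule Least_le)
  have pinj: "inj_on p B" by (metis P1 inj_onI)
  have plt: "p x < n" if x: "x \<in> B" for x
  proof -
    have inj: "inj_on (\<lambda>s. (f^^s) a) {0..p x}"
    proof (rule inj_onI, rule ccontr)
      fix s t assume st: "s \<in> {0..p x}" "t \<in> {0..p x}" "(f^^s) a = (f^^t) a" "s \<noteq> t"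
      have gen: "False" if "s' < t'" "t' \<le> p x" "(f^^s') a = (f^^t') a" for s' t'
      proof -
        have "(f^^(s' + (p x - t'))) a = (f^^((p x - t') + s')) a" by (simp add: add.commute)
        also have "\<dots> = (f^^(p x - t')) ((f^^s') a)" by (simp only: funpow_add comp_apply)
        also have "\<dots> = (f^^(p x - t')) ((f^^t') a)" using that by simp
        also have "\<dots> = (f^^(p x - t' + t')) a" by (simp add: funpow_add)
        also have "\<dots> = (f^^(p x)) a" using that by simp
        also have "\<dots> = x" using P1[OF x] .
        finally have "p x \<le> s' + (p x - t')" by (rule P2)
        then show False using that by linarith
      qed
      show False
      proof (cases "s < t")
        case True then show False using gen[of s t] st by auto
      next
        case False then show False using gen[of t s] st by auto
      qed
    qed
    have "(\<lambda>s. (f^^s) a) ` {0..p x} \<subseteq> B" using powB by auto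
    then have "card ((\<lambda>s. (f^^s) a) ` {0..p x}) \<le> n" unfolding n_def by (rule card_mono[OF fin])
    then have "card {0..p x} \<le> n" using card_image[OF inj] by simp
    then show ?thesis by simp
  qed
  have psucc: "p (f x) = (p x + 1) mod n" if x: "x \<in> B" for x
  proof -
    have e1: "(f^^(Suc (p x))) a = f x" using P1[OF x] by simp
    have le1: "p (f x) \<le> Suc (p x)" using P2[OF e1] .
    have fx: "f x \<in> B" using fB[OF x] .
    consider "p (f x) = Suc (p x)" | "p (f x) = 0" | "0 < p (f x)" "p (f x) < Suc (p x)" using le1 by linarith
    then show ?thesis
    proof cases
      case 1
      then have "Suc (p x) < n" using plt[OF fx] by simp
      then show ?thesis using 1 by simp
    next
      case 2
      then have fxa: "f x = a" using P1[OF fx] by simp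
      then have per: "(f^^(Suc (p x))) a = a" using e1 by simp
      have "p y \<le> p x" if y: "y \<in> B" for y
      proof -
        obtain m where m: "(f^^m) a = y" using reach[OF y] by blast
        have "(f^^(m mod Suc (p x))) a = y" using funpow_mod_eq[where f=f and n="Suc (p x)" and x=a and m=m, OF per] m by simp
        then have "p y \<le> m mod Suc (p x)" by (rule P2)
        then show ?thesis using mod_less_divisor[of "Suc (p x)" m] by linarith
      qed
      then have "p ` B \<subseteq> {0..p x}" by auto
      then have "card (p ` B) \<le> card {0..p x}" by (intro card_mono) auto
      then have "card (p ` B) \<le> Suc (p x)" by simp
      then have "n \<le> Suc (p x)" unfolding n_def using card_image[OF pinj] by simp
      then have "Suc (p x) = n" using plt[OF x] by simp
      then show ?thesis using 2 by simp
    next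
      case 3
      then obtain m' where m': "p (f x) = Suc m'" "m' < p x" by (metis Suc_less_SucD not0_implies_Suc neq0_conv)
      have "f ((f^^m') a) = f x" using P1[OF fx] m'(1) by simp
      then have "(f^^m') a = x" using fi powB x fx by (meson inj_onD)
      then have "p x \<le> m'" by (rule P2)
      then show ?thesis using m' by simp
    qed
  qed
  show "\<And>x. x \<in> B \<Longrightarrow> cyc_dist f a x < card B" using plt unfolding p_def n_def .
  show "\<And>x. x \<in> B \<Longrightarrow> cyc_dist f a (f x) = (cyc_dist f a x + 1) mod card B" using psucc unfolding p_def n_def .
  show "inj_on (cyc_dist f a) B" using pinj unfolding p_def .
  show "cyc_dist f a a = 0" unfolding cyc_dist_def by (rule Least_eq_0) simp
qed


lemma pivot_formula:
  assumes irr: "\<And>x. G x x = False" and sym: "\<And>x y. G x y = G y x" and ef: "G e f" and ne: "e \<noteq> f"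
  shows "pivot G e f x y = (if x = y then False else if x = e \<and> y = f \<or> x = f \<and> y = e then True
     else if x = e then G f y else if x = f then G e y else if y = e then G x f else if y = f then G x e
     else (G x y \<noteq> ((G e x \<and> G f y) \<noteq> (G f x \<and> G e y))))"
proof -
  have L: "local_comp H v a b = (H a b \<noteq> (H v a \<and> H v b \<and> a \<noteq> b))" for H :: "'a \<Rightarrow> 'a \<Rightarrow> bool" and v a b
    by (auto simp: local_comp_def)
  define G1 where "G1 = local_comp G e"
  define G2 where "G2 = local_comp G1 f"
  have P: "pivot G e f x y = (G2 x y \<noteq> (G2 e x \<and> G2 e y \<and> x \<noteq> y))"
    unfolding pivot_def G2_def G1_def L ..
  have g1: "G1 a b = (G a b \<noteq> (G e a \<and> G e b \<and> a \<noteq> b))" for a b unfolding G1_def L ..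
  have g2: "G2 a b = (G1 a b \<noteq> (G1 f a \<and> G1 f b \<and> a \<noteq> b))" for a b unfolding G2_def L ..
  have gfe: "G f e" using ef sym by simp
  have g1e: "G1 e b = G e b" for b using g1[of e b] irr[of e] by simp
  have g1f: "G1 f b = (G f b \<noteq> (G e b \<and> b \<noteq> f))" for b using g1[of f b] ef ne by auto
  have g1fe: "G1 f e" using g1f[of e] gfe ne irr[of e] by simp
  have g2e: "G2 e b = (G e b \<noteq> (G1 f b \<and> e \<noteq> b))" for b using g2[of e b] g1e[of b] g1fe by simp
  have g1ff: "G1 f f = False" using g1f[of f] irr[of f] by simp
  have g2ee: "G2 e e = False" using g2e[of e] irr[of e] by simp
  have g2eb: "G2 e b = G f b" if "b \<noteq> e" "b \<noteq> f" for b
    using g2e[of b] g1f[of b] that by auto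
  have g2ef: "G2 e f" using g2e[of f] g1ff ef ne by auto
  have g2f: "G2 f b = G1 f b" for b using g2[of f b] g1ff by simp
  show ?thesis
  proof (cases "x = y")
    case True
    then show ?thesis using P g2[of y y] g1[of y y] irr[of y] by simp
  next
    case xy: False
    show ?thesis
    proof (cases "x = e")
      case xe: True
      show ?thesis
      proof (cases "y = f")
        case True
        then show ?thesis using P xe g2ee g2ef ne by simp
      next
        case False
        have "pivot G e f x y = G2 e y" using P xe g2ee by simp
        also have "\<dots> = G f y" using g2eb[of y] xy xe False by simp
        finally show ?thesis using xe xy False by simp
      qed
    next
      case xe: False
      show ?thesis
      proof (cases "x = f")
        case xf: True
        show ?thesis
        proof (cases "y = e")
          case True
          then show ?thesis using P xf g2ee g2f[of e] g1fe ne by simp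
        next
          case False
          have "pivot G e f x y = (G1 f y \<noteq> (G2 e y))" using P xf g2f[of y] g2ef xy by simp
          also have "\<dots> = G e y" using g2eb[of y] g1f[of y] xy xf False by auto
          finally show ?thesis using xf xy False ne by simp
        qed
      next
        case xf: False
        have g2x: "G2 e x = G f x" using g2eb[of x] xe xf by simp
        have g1fx: "G1 f x = (G f x \<noteq> G e x)" using g1f[of x] xf by simp
        show ?thesis
        proof (cases "y = e")
          case ye: True
          have "pivot G e f x y = G2 x e" using P ye g2ee by simp
          also have "\<dots> = (G x e \<noteq> G1 f x)" using g2[of x e] g1[of x e] g1fe irr[of e] xe by simp
          also have "\<dots> = G x f" using g1fx sym[of x e] sym[of x f] by auto
          finally show ?thesis using ye xe xf xy by simp
        next
          case ye: False
          show ?thesis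
          proof (cases "y = f")
            case yf: True
            have "pivot G e f x y = (G2 x f \<noteq> G2 e x)" using P yf g2ef xf by simp
            also have "G2 x f = (G x f \<noteq> G e x)" using g2[of x f] g1ff g1[of x f] ef xf by simp
            finally have "pivot G e f x y = ((G x f \<noteq> G e x) \<noteq> G f x)" using g2x by simp
            also have "\<dots> = G x e" using sym[of x e] sym[of x f] by auto
            finally show ?thesis using yf ye xe xf xy by simp
          next
            case yf: False
            have g2y: "G2 e y = G f y" using g2eb[of y] ye yf by simp
            have g1fy: "G1 f y = (G f y \<noteq> G e y)" using g1f[of y] yf by simp
            have "pivot G e f x y = (G2 x y \<noteq> (G f x \<and> G f y))" using P g2x g2y xy by simp
            also have "G2 x y = (G1 x y \<noteq> (G1 f x \<and> G1 f y))" using g2[of x y] xy by simp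
            also have "G1 x y = (G x y \<noteq> (G e x \<and> G e y))" using g1[of x y] xy by simp
            finally have "pivot G e f x y = (((G x y \<noteq> (G e x \<and> G e y)) \<noteq> ((G f x \<noteq> G e x) \<and> (G f y \<noteq> G e y))) \<noteq> (G f x \<and> G f y))"
              using g1fx g1fy by simp
            also have "\<dots> = (G x y \<noteq> ((G e x \<and> G f y) \<noteq> (G f x \<and> G e y)))" by auto
            finally show ?thesis using yf ye xe xf xy by simp
          qed
        qed
      qed
    qed
  qed
qed

context
  fixes B :: "'a set" and \<sigma> \<alpha> :: "'a \<Rightarrow> 'a"
  assumes M: "is_map B \<sigma> \<alpha>"
begin

lemma finB: "finite B" using M unfolding is_map_def by auto
lemma aB: "x \<in> B \<Longrightarrow> \<alpha> x \<in> B" using M unfolding is_map_def by (meson permutes_in_image)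
lemma sB: "x \<in> B \<Longrightarrow> \<sigma> x \<in> B" using M unfolding is_map_def by (meson permutes_in_image)
lemma aa: "x \<in> B \<Longrightarrow> \<alpha> (\<alpha> x) = x" using M unfolding is_map_def by auto
lemma an: "x \<in> B \<Longrightarrow> \<alpha> x \<noteq> x" using M unfolding is_map_def by auto
lemma sinj: "inj_on \<sigma> B" using M unfolding is_map_def by (meson permutes_inj_on)

lemma edge_eq: "x \<in> B \<Longrightarrow> y \<in> B \<Longrightarrow> edge_of \<alpha> x = edge_of \<alpha> y \<longleftrightarrow> (y = x \<or> y = \<alpha> x)"
  unfolding edge_of_def using aa by (auto simp: doubleton_eq_iff)

lemma edge_a: "x \<in> B \<Longrightarrow> edge_of \<alpha> (\<alpha> x) = edge_of \<alpha> x"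
  unfolding edge_of_def using aa by auto

lemma mem_edge: "x \<in> B \<Longrightarrow> c \<in> B \<Longrightarrow> x \<in> edge_of \<alpha> c \<longleftrightarrow> (x = c \<or> x = \<alpha> c)"
  unfolding edge_of_def by auto

lemma tour_B: "x \<in> B \<Longrightarrow> tour \<sigma> \<alpha> S x \<in> B"
  unfolding tour_def using aB sB by auto

lemma tour_inj: "inj_on (tour \<sigma> \<alpha> S) B"
proof (rule inj_onI)
  fix x y assume x: "x \<in> B" and y: "y \<in> B" and eq: "tour \<sigma> \<alpha> S x = tour \<sigma> \<alpha> S y"
  define g where "g z = (if edge_of \<alpha> z \<in> S then \<alpha> z else z)" for z
  have gB: "g z \<in> B" if "z \<in> B" for z using that aB unfolding g_def by auto
  have "\<sigma> (g x) = \<sigma> (g y)" using eq unfolding tour_def g_def by (auto split: if_splits)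
  then have "g x = g y" using sinj gB x y by (meson inj_onD)
  show "x = y"
  proof (cases "edge_of \<alpha> x \<in> S")
    case xS: True
    show ?thesis
    proof (cases "edge_of \<alpha> y \<in> S")
      case True
      then have "\<alpha> x = \<alpha> y" using \<open>g x = g y\<close> xS unfolding g_def by simp
      then have "\<alpha> (\<alpha> x) = \<alpha> (\<alpha> y)" by simp
      then show ?thesis using aa[OF x] aa[OF y] by simp
    next
      case False
      then have "\<alpha> x = y" using \<open>g x = g y\<close> xS unfolding g_def by simp
      then have "edge_of \<alpha> y = edge_of \<alpha> x" using edge_a[OF x] by simp
      then show ?thesis using False xS by simp
    qed
  next
    case xS: False
    show ?thesis
    proof (cases "edge_of \<alpha> y \<in> S")
      case True
      then have "x = \<alpha> y" using \<open>g x = g y\<close> xS unfolding g_def by simp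
      then have "edge_of \<alpha> x = edge_of \<alpha> y" using edge_a[OF y] by simp
      then show ?thesis using True xS by simp
    next
      case False
      then show ?thesis using \<open>g x = g y\<close> xS unfolding g_def by simp
    qed
  qed
qed

lemma tour_sym:
  assumes x: "x \<in> B" and a0: "a0 \<in> B" and b0: "b0 \<in> B"
  shows "tour \<sigma> \<alpha> ((S - {edge_of \<alpha> a0, edge_of \<alpha> b0}) \<union> ({edge_of \<alpha> a0, edge_of \<alpha> b0} - S)) x
     = (if x \<in> edge_of \<alpha> a0 \<union> edge_of \<alpha> b0 then tour \<sigma> \<alpha> S (\<alpha> x) else tour \<sigma> \<alpha> S x)"
proof -
  have m: "edge_of \<alpha> x \<in> {edge_of \<alpha> a0, edge_of \<alpha> b0} \<longleftrightarrow> x \<in> edge_of \<alpha> a0 \<union> edge_of \<alpha> b0"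
    using edge_eq[OF a0 x] edge_eq[OF b0 x] mem_edge[OF x a0] mem_edge[OF x b0] by auto
  show ?thesis
    unfolding tour_def using m edge_a[OF x] aa[OF x] by auto
qed

lemma flags_dist:
  assumes c: "c \<in> B" and d: "d \<in> B" and ne: "edge_of \<alpha> c \<noteq> edge_of \<alpha> d"
  shows "c \<noteq> d" "c \<noteq> \<alpha> d" "\<alpha> c \<noteq> d" "\<alpha> c \<noteq> \<alpha> d" "c \<noteq> \<alpha> c" "d \<noteq> \<alpha> d"
  using ne edge_eq[OF c d] edge_eq[OF d c] an[OF c] an[OF d] aa[OF c] aa[OF d] by auto

lemma adj_char:
  assumes pn: "\<And>x. x \<in> B \<Longrightarrow> p x < card B"
    and ps: "\<And>x. x \<in> B \<Longrightarrow> p (tour \<sigma> \<alpha> S x) = (p x + 1) mod card B"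
    and pi: "inj_on p B"
    and c: "c \<in> B" and d: "d \<in> B" and ne: "edge_of \<alpha> c \<noteq> edge_of \<alpha> d"
  shows "lambda_adj B \<sigma> \<alpha> S (edge_of \<alpha> c) (edge_of \<alpha> d) = crossL (p c) (p (\<alpha> c)) (p d) (p (\<alpha> d))"
proof -
  let ?T = "tour \<sigma> \<alpha> S"
  let ?n = "card B"
  have cb: "cyc_between ?T x y z = btw (p x) (p y) (p z)"
    if "x \<in> B" "y \<in> B" "z \<in> B" "x \<noteq> y" "y \<noteq> z" "x \<noteq> z" for x y z
  proof -
    have pd: "p x \<noteq> p y" "p y \<noteq> p z" "p x \<noteq> p z"
      using inj_on_contraD[OF pi] that by auto
    have d1: "cyc_dist ?T x y = (p y + ?n - p x) mod ?n"
      by (rule posB_dist(2)[where B=B and f="?T" and p=p and n="?n"]) (use tour_B pn ps pi that in auto)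
    have d2: "cyc_dist ?T x z = (p z + ?n - p x) mod ?n"
      by (rule posB_dist(2)[where B=B and f="?T" and p=p and n="?n"]) (use tour_B pn ps pi that in auto)
    show ?thesis
      unfolding cyc_between_def d1 d2
      by (rule cyc_btw[OF pn[OF that(1)] pn[OF that(2)] pn[OF that(3)] pd(1) pd(2) pd(3)])
  qed
  have key: "(cyc_between ?T a b (\<alpha> a) \<noteq> cyc_between ?T a (\<alpha> b) (\<alpha> a)) = crossL (p c) (p (\<alpha> c)) (p d) (p (\<alpha> d))"
    if a: "a = c \<or> a = \<alpha> c" and b: "b = d \<or> b = \<alpha> d" for a b
  proof -
    have aB': "a \<in> B" "b \<in> B" using a b c d aB by auto
    have ea: "edge_of \<alpha> a = edge_of \<alpha> c" "edge_of \<alpha> b = edge_of \<alpha> d"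
      using a b edge_a c d by auto
    note fd = flags_dist[OF aB' ne[folded ea]]
    have aB2: "\<alpha> a \<in> B" "\<alpha> b \<in> B" using aB aB' by auto
    have dist: "p a \<noteq> p (\<alpha> a)" "p a \<noteq> p b" "p a \<noteq> p (\<alpha> b)" "p (\<alpha> a) \<noteq> p b" "p (\<alpha> a) \<noteq> p (\<alpha> b)" "p b \<noteq> p (\<alpha> b)"
      using inj_on_contraD[OF pi] fd aB' aB2 by auto
    have "(cyc_between ?T a b (\<alpha> a) \<noteq> cyc_between ?T a (\<alpha> b) (\<alpha> a)) =
          (btw (p a) (p b) (p (\<alpha> a)) \<noteq> btw (p a) (p (\<alpha> b)) (p (\<alpha> a)))"
      using cb[OF aB'(1) aB'(2) aB2(1) fd(1) not_sym[OF fd(3)] fd(5)]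
        cb[OF aB'(1) aB2(2) aB2(1) fd(2) fd(4)[symmetric] fd(5)] by simp
    also have "\<dots> = crossL (p a) (p (\<alpha> a)) (p b) (p (\<alpha> b))"
      by (rule cross_btw) (use dist in auto)
    also have "\<dots> = crossL (p c) (p (\<alpha> c)) (p d) (p (\<alpha> d))"
      using a b by (elim disjE) (simp_all add: aa[OF c] aa[OF d] crossL_swap1[of "p c"] crossL_swap2[of _ _ "p d"])
    finally show ?thesis .
  qed
  have me: "edge_of \<alpha> c \<in> map_edges B \<alpha>" "edge_of \<alpha> d \<in> map_edges B \<alpha>"
    unfolding map_edges_def using c d by auto
  show ?thesis
  proof
    assume "lambda_adj B \<sigma> \<alpha> S (edge_of \<alpha> c) (edge_of \<alpha> d)"
    then obtain a b where ab: "a \<in> B" "b \<in> B" "edge_of \<alpha> c = edge_of \<alpha> a" "edge_of \<alpha> d = edge_of \<alpha> b"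
      "cyc_between ?T a b (\<alpha> a) \<noteq> cyc_between ?T a (\<alpha> b) (\<alpha> a)"
      unfolding lambda_adj_def by blast
    have "a = c \<or> a = \<alpha> c" "b = d \<or> b = \<alpha> d" using ab edge_eq c d by auto
    then show "crossL (p c) (p (\<alpha> c)) (p d) (p (\<alpha> d))" using key ab(5) by blast
  next
    assume "crossL (p c) (p (\<alpha> c)) (p d) (p (\<alpha> d))"
    then show "lambda_adj B \<sigma> \<alpha> S (edge_of \<alpha> c) (edge_of \<alpha> d)"
      unfolding lambda_adj_def using me ne c d key[of c d] by blast
  qed
qed

lemma adj_edges: "lambda_adj B \<sigma> \<alpha> S x y \<Longrightarrow> x \<in> map_edges B \<alpha> \<and> y \<in> map_edges B \<alpha> \<and> x \<noteq> y"
  unfolding lambda_adj_def by auto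

lemma adj_sym:
  assumes pn: "\<And>x. x \<in> B \<Longrightarrow> p x < card B"
    and ps: "\<And>x. x \<in> B \<Longrightarrow> p (tour \<sigma> \<alpha> S x) = (p x + 1) mod card B"
    and pi: "inj_on p B"
  shows "lambda_adj B \<sigma> \<alpha> S x y = lambda_adj B \<sigma> \<alpha> S y x"
proof (cases "x \<in> map_edges B \<alpha> \<and> y \<in> map_edges B \<alpha> \<and> x \<noteq> y")
  case True
  then obtain c d where cd: "c \<in> B" "d \<in> B" "x = edge_of \<alpha> c" "y = edge_of \<alpha> d"
    unfolding map_edges_def by auto
  note fd = flags_dist[OF cd(1,2)] 
  have dist: "p c \<noteq> p (\<alpha> c)" "p c \<noteq> p d" "p c \<noteq> p (\<alpha> d)" "p (\<alpha> c) \<noteq> p d" "p (\<alpha> c) \<noteq> p (\<alpha> d)" "p d \<noteq> p (\<alpha> d)"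
    using inj_on_contraD[OF pi] fd True cd aB by auto
  show ?thesis
    using adj_char[OF pn ps pi cd(1,2)] adj_char[OF pn ps pi cd(2,1)] True cd crossL_sym[OF dist] by auto
next
  case False
  then show ?thesis using adj_edges by blast
qed

end


lemma xor_id:
  "((A1 \<noteq> ((Ea \<and> Q1) \<noteq> (Fx \<and> P1))) \<noteq> (A2 \<noteq> ((Ea \<and> Q2) \<noteq> (Fx \<and> P2)))) =
   ((A1 \<noteq> A2) \<noteq> ((Ea \<and> (Q1 \<noteq> Q2)) \<noteq> (Fx \<and> (P1 \<noteq> P2))))"
  by (cases A1; cases A2; cases Ea; cases Fx; cases P1; cases P2; cases Q1; cases Q2; simp)

lemma mem_edge_eq:
  assumes M: "is_map B \<sigma> \<alpha>" and x: "x \<in> B" and c: "c \<in> B" and xc: "x \<in> edge_of \<alpha> c"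
  shows "edge_of \<alpha> x = edge_of \<alpha> c"
  using mem_edge[OF M x c] xc edge_a[OF M c] by auto

lemma inI_0: "0 < j \<Longrightarrow> inI 0 j w = (0 < w \<and> w < j)"
  unfolding inI_def by simp
lemma inI_lt: "i < k \<Longrightarrow> inI i k w = (i < w \<and> w < k)"
  unfolding inI_def by simp

lemma noncross_arith:
  assumes "0 < (j::nat)" "u < v" "u \<noteq> 0" "u \<noteq> j" "v \<noteq> j" "\<not> crossL 0 j u v"
  shows "\<not> (u < j \<and> j \<le> v)"
  using assms unfolding crossL_def inI_def by auto

lemma cross_pick:
  assumes "0 < (j::nat)" "w \<noteq> 0" "w \<noteq> j" "z \<noteq> 0" "z \<noteq> j" "crossL 0 j w z"
  shows "(0 < w \<and> w < j \<and> j < z) \<or> (0 < z \<and> z < j \<and> j < w)"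
  using assms unfolding crossL_def inI_def by auto


theorem lemma8:
  fixes B :: "'a set" and \<sigma> \<alpha> :: "'a \<Rightarrow> 'a" and S :: "'a set set" and e f :: "'a set"
  assumes "is_map B \<sigma> \<alpha>"
    and "quasi_tree B \<sigma> \<alpha> S"
    and "e \<in> map_edges B \<alpha>" and "f \<in> map_edges B \<alpha>" and "e \<noteq> f"
  shows "(lambda_adj B \<sigma> \<alpha> S e f \<longrightarrow>
            quasi_tree B \<sigma> \<alpha> ((S - {e, f}) \<union> ({e, f} - S))
          \<and> lambda_adj B \<sigma> \<alpha> ((S - {e, f}) \<union> ({e, f} - S)) = pivot (lambda_adj B \<sigma> \<alpha> S) e f
          \<and> lambda_col ((S - {e, f}) \<union> ({e, f} - S))
              = (\<lambda>x. if x = e \<or> x = f then 3 - lambda_col S x else lambda_col S x))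
       \<and> (quasi_tree B \<sigma> \<alpha> ((S - {e, f}) \<union> ({e, f} - S)) \<longrightarrow> lambda_adj B \<sigma> \<alpha> S e f)"
proof -
  note M = assms(1)
  have triv: "\<And>x. x \<in> B \<Longrightarrow> x \<in> B" by simp
  note QT = assms(2)
  define S' where "S' = (S - {e, f}) \<union> ({e, f} - S)"
  obtain a0 where a0: "a0 \<in> B" "e = edge_of \<alpha> a0" using assms(3) unfolding map_edges_def by auto
  obtain b0 where b0: "b0 \<in> B" "f = edge_of \<alpha> b0" using assms(4) unfolding map_edges_def by auto
  define p where "p = cyc_dist (tour \<sigma> \<alpha> S) a0"
  have reach: "\<exists>m. (tour \<sigma> \<alpha> S ^^ m) a0 = x" if "x \<in> B" for x
    using QT a0(1) that unfolding quasi_tree_def by auto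
  note op = orbit_pos[OF finB[OF M] tour_B[OF M] tour_inj[OF M] a0(1) reach]
  have pn: "\<And>x. x \<in> B \<Longrightarrow> p x < card B" using op(1) unfolding p_def .
  have ps: "\<And>x. x \<in> B \<Longrightarrow> p (tour \<sigma> \<alpha> S x) = (p x + 1) mod card B" using op(2) unfolding p_def .
  have pi: "inj_on p B" using op(3) unfolding p_def .
  have p0: "p a0 = 0" using op(4) unfolding p_def .
  have pne: "p x \<noteq> p y" if "x \<in> B" "y \<in> B" "x \<noteq> y" for x y
    using inj_on_contraD[OF pi] that by auto
  have tS': "tour \<sigma> \<alpha> S' x = (if x \<in> e \<union> f then tour \<sigma> \<alpha> S (\<alpha> x) else tour \<sigma> \<alpha> S x)" if "x \<in> B" for x
    using tour_sym[OF M that a0(1) b0(1)] a0 b0 unfolding S'_def by simp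
  have ef_ne: "edge_of \<alpha> a0 \<noteq> edge_of \<alpha> b0" using assms(5) a0 b0 by simp
  note fd = flags_dist[OF M a0(1) b0(1) ef_ne]
  have aa0: "\<alpha> a0 \<in> B" "\<alpha> b0 \<in> B" using aB[OF M] a0 b0 by auto
  define j where "j = p (\<alpha> a0)"
  have j0: "0 < j" using pne[OF a0(1) aa0(1) fd(5)] p0 j_def by simp
  have jn: "j < card B" using pn[OF aa0(1)] j_def by simp
  have adjS: "lambda_adj B \<sigma> \<alpha> S e f = crossL 0 j (p b0) (p (\<alpha> b0))"
    using adj_char[OF M pn ps pi a0(1) b0(1) ef_ne] a0 b0 p0 j_def by simp
  have pb0: "p b0 \<noteq> 0" "p b0 \<noteq> j" "p (\<alpha> b0) \<noteq> 0" "p (\<alpha> b0) \<noteq> j" "p b0 \<noteq> p (\<alpha> b0)"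
    using pne[OF a0(1) b0(1) fd(1)] pne[OF aa0(1) b0(1) fd(3)] pne[OF a0(1) aa0(2) fd(2)]
      pne[OF aa0(1) aa0(2) fd(4)] pne[OF b0(1) aa0(2) fd(6)] p0 j_def by auto
  have fe: "e \<in> map_edges B \<alpha>" "f \<in> map_edges B \<alpha>" using assms(3,4) .
  have Smap: "S \<subseteq> map_edges B \<alpha>" using QT unfolding quasi_tree_def by auto
  have S'map: "S' \<subseteq> map_edges B \<alpha>" using Smap fe unfolding S'_def by auto
  have col: "lambda_col S' = (\<lambda>x. if x = e \<or> x = f then 3 - lambda_col S x else lambda_col S x)"
    unfolding S'_def lambda_col_def by auto
  have conv: "lambda_adj B \<sigma> \<alpha> S e f" if QT': "quasi_tree B \<sigma> \<alpha> S'"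
  proof (rule ccontr)
    assume nadj: "\<not> lambda_adj B \<sigma> \<alpha> S e f"
    have ncr: "\<not> crossL 0 j (p b0) (p (\<alpha> b0))" using nadj adjS by simp
    obtain yu where yu: "yu = b0 \<or> yu = \<alpha> b0" and ord: "p yu < p (\<alpha> yu)"
    proof (cases "p b0 < p (\<alpha> b0)")
      case True
      then show ?thesis using that[of b0] by simp
    next
      case False
      then have "p (\<alpha> b0) < p (\<alpha> (\<alpha> b0))" using pb0(5) aa[OF M b0(1)] by simp
      then show ?thesis using that[of "\<alpha> b0"] by simp
    qed
    have yuB: "yu \<in> B" "\<alpha> yu \<in> B" using yu b0(1) aa0 aa[OF M b0(1)] by auto
    have fyu: "f = edge_of \<alpha> yu" using yu b0 edge_a[OF M b0(1)] by auto
    have ayu: "\<alpha> (\<alpha> yu) = yu" using aa[OF M yuB(1)] .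
    define u where "u = p yu"
    define v where "v = p (\<alpha> yu)"
    have uv: "u < v" using ord u_def v_def by simp
    have uvn: "u \<noteq> 0" "u \<noteq> j" "v \<noteq> j" using yu pb0 aa[OF M b0(1)] u_def v_def by auto
    have ncr': "\<not> crossL 0 j u v" using yu ncr aa[OF M b0(1)] crossL_swap2 u_def v_def by metis
    have outj: "\<not> (u < j \<and> j \<le> v)" by (rule noncross_arith[OF j0 uv uvn ncr'])
    have vn: "v < card B" using pn[OF yuB(2)] v_def by simp
    have flag: "x \<in> e \<union> f \<longleftrightarrow> (x = a0 \<or> x = \<alpha> a0 \<or> x = yu \<or> x = \<alpha> yu)" if "x \<in> B" for x
      using mem_edge[OF M that a0(1)] mem_edge[OF M that yuB(1)] a0(2) fyu by auto
    define C where "C = {x \<in> B. u < p x \<and> p x \<le> v}"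
    have closed: "tour \<sigma> \<alpha> S' x \<in> C" if xC: "x \<in> C" for x
    proof -
      have xB: "x \<in> B" and xu: "u < p x" and xv: "p x \<le> v" using xC unfolding C_def by auto
      show ?thesis
      proof (cases "x \<in> e \<union> f")
        case True
        then have "x = a0 \<or> x = \<alpha> a0 \<or> x = yu \<or> x = \<alpha> yu" using flag[OF xB] by simp
        moreover have "x \<noteq> a0" using xu p0 by auto
        moreover have "x \<noteq> \<alpha> a0" using xu xv outj j_def by auto
        moreover have "x \<noteq> yu" using xu u_def by auto
        ultimately have xa: "x = \<alpha> yu" by simp
        have "tour \<sigma> \<alpha> S' x = tour \<sigma> \<alpha> S yu" using tS'[OF xB] True xa ayu by simp
        moreover have "p (tour \<sigma> \<alpha> S yu) = u + 1" using ps[OF yuB(1)] u_def uv vn by simp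
        ultimately show ?thesis unfolding C_def using tour_B[OF M yuB(1)] uv by simp
      next
        case False
        have "x \<noteq> \<alpha> yu" using False flag[OF xB] by simp
        then have "p x \<noteq> v" using pne[OF xB yuB(2)] v_def by simp
        then have "p x < v" using xv by simp
        then have "p (tour \<sigma> \<alpha> S x) = p x + 1" using ps[OF xB] vn by simp
        moreover have "tour \<sigma> \<alpha> S' x = tour \<sigma> \<alpha> S x" using tS'[OF xB] False by simp
        ultimately show ?thesis unfolding C_def using tour_B[OF M xB] xu \<open>p x < v\<close> by simp
      qed
    qed
    have iter: "(tour \<sigma> \<alpha> S' ^^ m) (\<alpha> yu) \<in> C" for m
    proof (induction m)
      case 0
      then show ?case unfolding C_def using yuB uv v_def by simp
    next
      case (Suc m)
      then show ?case using closed by simp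
    qed
    obtain m where "(tour \<sigma> \<alpha> S' ^^ m) (\<alpha> yu) = a0"
      using QT' yuB(2) a0(1) unfolding quasi_tree_def by blast
    then have "a0 \<in> C" using iter[of m] by simp
    then show False unfolding C_def using p0 by simp
  qed
  have fwd: "quasi_tree B \<sigma> \<alpha> S' \<and> lambda_adj B \<sigma> \<alpha> S' = pivot (lambda_adj B \<sigma> \<alpha> S) e f"
    if adj: "lambda_adj B \<sigma> \<alpha> S e f"
  proof -
    have cr: "crossL 0 j (p b0) (p (\<alpha> b0))" using adj adjS by simp
    obtain b where b: "b = b0 \<or> b = \<alpha> b0" and ib: "0 < p b" "p b < j" and kb: "j < p (\<alpha> b)"
    proof -
      have "(0 < p b0 \<and> p b0 < j \<and> j < p (\<alpha> b0)) \<or> (0 < p (\<alpha> b0) \<and> p (\<alpha> b0) < j \<and> j < p b0)"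
        by (rule cross_pick[OF j0 pb0(1-4) cr])
      then show ?thesis
      proof
        assume h: "0 < p b0 \<and> p b0 < j \<and> j < p (\<alpha> b0)"
        show ?thesis using that[of b0] h by simp
      next
        assume h: "0 < p (\<alpha> b0) \<and> p (\<alpha> b0) < j \<and> j < p b0"
        show ?thesis using that[of "\<alpha> b0"] h aa[OF M b0(1)] by simp
      qed
    qed
    have bB: "b \<in> B" "\<alpha> b \<in> B" using b b0(1) aa0 aa[OF M b0(1)] by auto
    have fb: "f = edge_of \<alpha> b" using b b0 edge_a[OF M b0(1)] by auto
    have ab: "\<alpha> (\<alpha> b) = b" using aa[OF M bB(1)] .
    define i where "i = p b"
    define k where "k = p (\<alpha> b)"
    have ijk: "0 < i" "i < j" "j < k" "k < card B" using ib kb pn[OF bB(2)] i_def k_def by auto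
    have flag: "x \<in> e \<union> f \<longleftrightarrow> (x = a0 \<or> x = \<alpha> a0 \<or> x = b \<or> x = \<alpha> b)" if "x \<in> B" for x
      using mem_edge[OF M that a0(1)] mem_edge[OF M that bB(1)] a0(2) fb by auto
    have nonm: "p x \<notin> {0, i, j, k}" if "x \<in> B" "x \<notin> e \<union> f" for x
    proof -
      have "x \<noteq> a0" "x \<noteq> \<alpha> a0" "x \<noteq> b" "x \<noteq> \<alpha> b" using flag[OF that(1)] that(2) by auto
      then show ?thesis using pne[OF that(1) a0(1)] pne[OF that(1) aa0(1)] pne[OF that(1) bB(1)] pne[OF that(1) bB(2)]
        p0 i_def j_def k_def by auto
    qed
    define p' where "p' x = Pp i j k (p x)" for x
    have pn': "p' x < card B" if "x \<in> B" for x
      unfolding p'_def using Pp_lt[OF ijk pn[OF that]] .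
    have pi': "inj_on p' B"
    proof (rule inj_onI)
      fix x y assume "x \<in> B" "y \<in> B" "p' x = p' y"
      then have "p x = p y" using Pp_inj[OF ijk] pn unfolding p'_def by (meson inj_onD lessThan_iff)
      then show "x = y" using pi \<open>x \<in> B\<close> \<open>y \<in> B\<close> by (meson inj_onD)
    qed
    have pv: "p' a0 = 0" "p' (\<alpha> a0) = k - i" "p' b = k" "p' (\<alpha> b) = k - j"
      using Pp_vals[OF ijk(1-3)] p0 unfolding p'_def i_def[symmetric] j_def[symmetric] k_def[symmetric] by auto
    note PF = Pp_flags[OF ijk]
    have ps': "p' (tour \<sigma> \<alpha> S' x) = (p' x + 1) mod card B" if xB: "x \<in> B" for x
    proof (cases "x \<in> e \<union> f")
      case True
      then have "x = a0 \<or> x = \<alpha> a0 \<or> x = b \<or> x = \<alpha> b" using flag[OF xB] by simp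
      then show ?thesis
      proof (elim disjE)
        assume x: "x = a0"
        have "tour \<sigma> \<alpha> S' x = tour \<sigma> \<alpha> S (\<alpha> a0)" using tS'[OF xB] True x by simp
        then have "p (tour \<sigma> \<alpha> S' x) = (j + 1) mod card B" using ps[OF aa0(1)] j_def by simp
        then show ?thesis using PF(1) x p0 unfolding p'_def by simp
      next
        assume x: "x = \<alpha> a0"
        have "tour \<sigma> \<alpha> S' x = tour \<sigma> \<alpha> S a0" using tS'[OF xB] True x aa[OF M a0(1)] by simp
        then have "p (tour \<sigma> \<alpha> S' x) = (0 + 1) mod card B" using ps[OF a0(1)] p0 by simp
        then show ?thesis using PF(2) x j_def unfolding p'_def by simp
      next
        assume x: "x = b"
        have "tour \<sigma> \<alpha> S' x = tour \<sigma> \<alpha> S (\<alpha> b)" using tS'[OF xB] True x by simp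
        then have "p (tour \<sigma> \<alpha> S' x) = (k + 1) mod card B" using ps[OF bB(2)] k_def by simp
        then show ?thesis using PF(4) x i_def unfolding p'_def by simp
      next
        assume x: "x = \<alpha> b"
        have "tour \<sigma> \<alpha> S' x = tour \<sigma> \<alpha> S b" using tS'[OF xB] True x ab by simp
        then have "p (tour \<sigma> \<alpha> S' x) = (i + 1) mod card B" using ps[OF bB(1)] i_def by simp
        then show ?thesis using PF(3) x k_def unfolding p'_def by simp
      qed
    next
      case False
      have "tour \<sigma> \<alpha> S' x = tour \<sigma> \<alpha> S x" using tS'[OF xB] False by simp
      then show ?thesis using ps[OF xB] Pp_succ[OF ijk pn[OF xB] nonm[OF xB False]] unfolding p'_def by simp
    qed
    have QT': "quasi_tree B \<sigma> \<alpha> S'"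
      unfolding quasi_tree_def
    proof (intro conjI S'map ballI)
      fix x y assume "x \<in> B" "y \<in> B"
      then show "\<exists>n. (tour \<sigma> \<alpha> S' ^^ n) x = y"
        using posB_dist(1)[where B=B and f="tour \<sigma> \<alpha> S'" and p=p' and n="card B", OF tour_B[OF M] pn' ps' pi'] by blast
    qed
    let ?G = "lambda_adj B \<sigma> \<alpha> S"
    let ?G' = "lambda_adj B \<sigma> \<alpha> S'"
    have Girr: "\<And>x. ?G x x = False" unfolding lambda_adj_def by auto
    have Gsym: "\<And>x y. ?G x y = ?G y x" using adj_sym[where p=p and S=S, OF M pn ps pi] .
    have G'sym: "\<And>x y. ?G' x y = ?G' y x" using adj_sym[where p=p' and S=S', OF M pn' ps' pi'] .
    note PV = pivot_formula[of ?G e f, OF Girr Gsym adj assms(5)]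
    have Gc: "?G (edge_of \<alpha> c) (edge_of \<alpha> d) = crossL (p c) (p (\<alpha> c)) (p d) (p (\<alpha> d))"
      if "c \<in> B" "d \<in> B" "edge_of \<alpha> c \<noteq> edge_of \<alpha> d" for c d
      using adj_char[OF M pn ps pi that] .
    have G'c: "?G' (edge_of \<alpha> c) (edge_of \<alpha> d) = crossL (p' c) (p' (\<alpha> c)) (p' d) (p' (\<alpha> d))"
      if "c \<in> B" "d \<in> B" "edge_of \<alpha> c \<noteq> edge_of \<alpha> d" for c d
      using adj_char[OF M pn' ps' pi' that] .
    have other: "d \<notin> e \<union> f" "\<alpha> d \<notin> e \<union> f" if "d \<in> B" "edge_of \<alpha> d \<noteq> e" "edge_of \<alpha> d \<noteq> f" for d
    proof -
      have adB: "\<alpha> d \<in> B" using aB[OF M that(1)] .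
      have ead: "edge_of \<alpha> (\<alpha> d) = edge_of \<alpha> d" using edge_a[OF M that(1)] .
      show "d \<notin> e \<union> f"
        using mem_edge_eq[OF M that(1) a0(1)] mem_edge_eq[OF M that(1) bB(1)] a0(2) fb that(2,3) by auto
      show "\<alpha> d \<notin> e \<union> f"
        using mem_edge_eq[OF M adB a0(1)] mem_edge_eq[OF M adB bB(1)] a0(2) fb that(2,3) ead by auto
    qed
    have eother: "?G' e y = ?G f y" if yM: "y \<in> map_edges B \<alpha>" "y \<noteq> e" "y \<noteq> f" for y
    proof -
      obtain d where d: "d \<in> B" "y = edge_of \<alpha> d" using yM(1) unfolding map_edges_def by auto
      have dB: "\<alpha> d \<in> B" using aB[OF M d(1)] .
      note o = other[OF d(1) that(2,3)[unfolded d(2)]]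
      have "?G' e y = crossL (p' a0) (p' (\<alpha> a0)) (p' d) (p' (\<alpha> d))"
        using G'c[OF a0(1) d(1)] a0 d that by simp
      also have "\<dots> = ((i < p d \<and> p d < k) \<noteq> (i < p (\<alpha> d) \<and> p (\<alpha> d) < k))"
        unfolding crossL_def pv unfolding p'_def using ME[OF ijk(1-3) nonm[OF d(1) o(1)]] ME[OF ijk(1-3) nonm[OF dB o(2)]] by simp
      also have "\<dots> = crossL (p b) (p (\<alpha> b)) (p d) (p (\<alpha> d))"
        unfolding crossL_def i_def[symmetric] k_def[symmetric] using inI_lt[of i k] ijk by simp
      also have "\<dots> = ?G f y"
        using Gc[OF bB(1) d(1)] fb d that by simp
      finally show ?thesis .
    qed
    have fother: "?G' f y = ?G e y" if yM: "y \<in> map_edges B \<alpha>" "y \<noteq> e" "y \<noteq> f" for y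
    proof -
      obtain d where d: "d \<in> B" "y = edge_of \<alpha> d" using yM(1) unfolding map_edges_def by auto
      have dB: "\<alpha> d \<in> B" using aB[OF M d(1)] .
      note o = other[OF d(1) that(2,3)[unfolded d(2)]]
      have "?G' f y = crossL (p' b) (p' (\<alpha> b)) (p' d) (p' (\<alpha> d))"
        using G'c[OF bB(1) d(1)] fb d that by simp
      also have "\<dots> = ((0 < p d \<and> p d < j) \<noteq> (0 < p (\<alpha> d) \<and> p (\<alpha> d) < j))"
        unfolding crossL_def pv unfolding p'_def using MF[OF ijk(1-3) nonm[OF d(1) o(1)]] MF[OF ijk(1-3) nonm[OF dB o(2)]] by simp
      also have "\<dots> = crossL (p a0) (p (\<alpha> a0)) (p d) (p (\<alpha> d))"
        unfolding crossL_def p0 j_def[symmetric] using inI_0[OF j0] by simp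
      also have "\<dots> = ?G e y"
        using Gc[OF a0(1) d(1)] a0 d that by simp
      finally show ?thesis .
    qed
    have piv: "?G' x y = pivot ?G e f x y" for x y
    proof (cases "x \<in> map_edges B \<alpha> \<and> y \<in> map_edges B \<alpha> \<and> x \<noteq> y")
      case False
      then have "\<not> ?G' x y" using adj_edges[OF M] by blast
      moreover have "\<not> pivot ?G e f x y"
      proof -
        have ne1: "\<not> ?G u v" if "u \<notin> map_edges B \<alpha> \<or> v \<notin> map_edges B \<alpha>" for u v
          using adj_edges[OF M] that by blast
        show ?thesis unfolding PV using False ne1 fe by auto
      qed
      ultimately show ?thesis by simp
    next
      case True
      then have xE: "x \<in> map_edges B \<alpha>" and yE: "y \<in> map_edges B \<alpha>" and xy: "x \<noteq> y" by auto
      show ?thesis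
      proof (cases "x = e \<or> x = f \<or> y = e \<or> y = f")
        case True
        have Gef: "?G' e f"
        proof -
          have "?G' e f = crossL (p' a0) (p' (\<alpha> a0)) (p' b) (p' (\<alpha> b))"
            using G'c[OF a0(1) bB(1)] a0 fb assms(5) by simp
          then show ?thesis unfolding pv using MEF[OF ijk(1-3)] by simp
        qed
        show ?thesis
          unfolding PV using True xy Gef G'sym[of f e] eother[OF xE] eother[OF yE] fother[OF xE] fother[OF yE]
            G'sym[of x e] G'sym[of x f] Gsym[of f x] Gsym[of e x] by auto
      next
        case False
        obtain c where c: "c \<in> B" "x = edge_of \<alpha> c" using xE unfolding map_edges_def by auto
        obtain d where d: "d \<in> B" "y = edge_of \<alpha> d" using yE unfolding map_edges_def by auto
        have cB: "\<alpha> c \<in> B" using aB[OF M c(1)] .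
        have dB: "\<alpha> d \<in> B" using aB[OF M d(1)] .
        note oc = other[OF c(1)] and od = other[OF d(1)]
        have oc1: "c \<notin> e \<union> f" "\<alpha> c \<notin> e \<union> f" using oc False c by auto
        have od1: "d \<notin> e \<union> f" "\<alpha> d \<notin> e \<union> f" using od False d by auto
        note fdcd = flags_dist[OF M c(1) d(1) xy[unfolded c(2) d(2)]]
        have dd: "p c \<noteq> p (\<alpha> c)" "p c \<noteq> p d" "p c \<noteq> p (\<alpha> d)" "p (\<alpha> c) \<noteq> p d" "p (\<alpha> c) \<noteq> p (\<alpha> d)"
          "p d \<noteq> p (\<alpha> d)"
          using pne fdcd c(1) d(1) cB dB by auto
        note nm = nonm[OF c(1) oc1(1)] nonm[OF cB oc1(2)] nonm[OF d(1) od1(1)] nonm[OF dB od1(2)]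
        have "?G' x y = crossL (p' c) (p' (\<alpha> c)) (p' d) (p' (\<alpha> d))"
          using G'c[OF c(1) d(1)] c d xy by simp
        also have "\<dots> = ((inI (p c) (p (\<alpha> c)) (p d) \<noteq> ((((0 < p c \<and> p c < j) \<noteq> (0 < p (\<alpha> c) \<and> p (\<alpha> c) < j)) \<and> (i < p d \<and> p d < k)) \<noteq> (((i < p c \<and> p c < k) \<noteq> (i < p (\<alpha> c) \<and> p (\<alpha> c) < k)) \<and> (0 < p d \<and> p d < j)))) \<noteq> (inI (p c) (p (\<alpha> c)) (p (\<alpha> d)) \<noteq> ((((0 < p c \<and> p c < j) \<noteq> (0 < p (\<alpha> c) \<and> p (\<alpha> c) < j)) \<and> (i < p (\<alpha> d) \<and> p (\<alpha> d) < k)) \<noteq> (((i < p c \<and> p c < k) \<noteq> (i < p (\<alpha> c) \<and> p (\<alpha> c) < k)) \<and> (0 < p (\<alpha> d) \<and> p (\<alpha> d) < j)))))"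
          unfolding crossL_def p'_def
          using pt[OF ijk(1-3) nm(1) nm(2) nm(3) dd(1) dd(2) dd(4)] pt[OF ijk(1-3) nm(1) nm(2) nm(4) dd(1) dd(3) dd(5)]
          by simp
        also have "\<dots> = (crossL (p c) (p (\<alpha> c)) (p d) (p (\<alpha> d)) \<noteq>
             ((crossL (p a0) (p (\<alpha> a0)) (p c) (p (\<alpha> c)) \<and> crossL (p b) (p (\<alpha> b)) (p d) (p (\<alpha> d))) \<noteq>
              (crossL (p b) (p (\<alpha> b)) (p c) (p (\<alpha> c)) \<and> crossL (p a0) (p (\<alpha> a0)) (p d) (p (\<alpha> d)))))"
          unfolding crossL_def p0 j_def[symmetric] i_def[symmetric] k_def[symmetric] inI_0[OF j0] inI_lt[OF less_trans[OF ijk(2,3)]]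
          by (rule xor_id)
        also have "\<dots> = (?G x y \<noteq> ((?G e x \<and> ?G f y) \<noteq> (?G f x \<and> ?G e y)))"
        proof -
          have ne4: "edge_of \<alpha> a0 \<noteq> edge_of \<alpha> c" "edge_of \<alpha> a0 \<noteq> edge_of \<alpha> d"
            "edge_of \<alpha> b \<noteq> edge_of \<alpha> c" "edge_of \<alpha> b \<noteq> edge_of \<alpha> d"
            using False a0 fb c d by auto
          show ?thesis
            using Gc[OF c(1) d(1)] Gc[OF a0(1) c(1) ne4(1)] Gc[OF a0(1) d(1) ne4(2)] Gc[OF bB(1) c(1) ne4(3)]
              Gc[OF bB(1) d(1) ne4(4)] a0 fb c d xy by simp
        qed
        also have "\<dots> = pivot ?G e f x y" unfolding PV using xy False by simp
        finally show ?thesis .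
      qed
    qed
    show ?thesis using QT' piv by auto
  qed
  show ?thesis using fwd conv col unfolding S'_def by blast
qed

end
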